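(* Let $\gamma=(\gamma_1,\dots,\gamma_b)$ be a parallel map on $V=V_1\oplus\cdots\oplus V_b$, $V_i\cong(\mathbb F_2)^m$, with $0\gamma=0$. Suppose every $\gamma_i$ is differentially $2^r$-uniform with $r<m-1$ and strongly $r$-anti-invariant. If $\gamma$ maps $\mathcal{LA}_U(W_1|W_2)$ onto a non-trivial partition $\mathcal{LA}_{U'}(W_1'|W_2')$, where $U,U'$ satisfy $J_U\cap J_{U'}=\emptyset$, then $W_1,W_1',W_2,W_2'$ are walls and $W_1=W_1'=W_2=W_2'$; in particular both partitions are linear.
   Context: Let $m,b>1$, $n=mb$, $V=(\mathbb F_2)^n=V_1\oplus\cdots\oplus V_b$, $V_i\cong(\mathbb F_2)^m$. Permutations act on the right. A parallel map is $\gamma\in\mathrm{Sym}(V)$ with $(v_1\oplus\cdots\oplus v_b)\gamma=v_1\gamma_1\oplus\cdots\oplus v_b\gamma_b$, $\gamma_i\in\mathrm{Sym}(V_i)$. A wall is $\bigoplus_{i\in I}V_i$ with $\emptyset\ne I\subsetneq\{1,\dots,b\}$. For a subspace $U$ of dimension $n-1$, $J_U=\{j:V_j\cap U\subsetneq V_j\}$. $f:(\mathbb F_2)^m\to(\mathbb F_2)^m$ is differentially $\delta$-uniform if $\delta=\max_{a\ne0,b}|\{x:f(x+a)+f(x)=b\}|$; for $f(0)=0$ and $1\le r<m$, $f$ is strongly $r$-anti-invariant if for all subspaces $A,B$ of $(\mathbb F_2)^m$ with $f(A)=B$, either $\dim A=\dim B<m-r$ or $A=B=(\mathbb F_2)^m$.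 A permutation maps $\mathcal A$ onto $\mathcal B$ if it sends the blocks of $\mathcal A$ exactly onto those of $\mathcal B$; trivial partitions are the singleton partition and $\{V\}$. $\mathcal L(W)=\{W+v:v\in V\}$ (linear partition). For a subspace $U$ of dimension $n-1$ and subspaces $W_1,W_2\subseteq U$, $\mathcal{LA}_U(W_1|W_2)=\{W_1+v:v\in U\}\cup\{(W_2+\bar v)+v:v\in U\}$ for any $\bar v\in V\setminus U$. *)

theory Defs
  imports Main
begin

text \<open>Vectors of (F_2)^n are modelled as functions nat \<Rightarrow> bool vanishing from index n on;
  addition is pointwise xor. V = vecs (m*b); block V_i (0-indexed, i < b) consists of the
  coordinates i*m ..< (i+1)*m.\<close>

definition vecs :: "nat \<Rightarrow> (nat \<Rightarrow> bool) set" where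
  "vecs n = {x. \<forall>k\<ge>n. \<not> x k}"

definition vadd :: "(nat \<Rightarrow> bool) \<Rightarrow> (nat \<Rightarrow> bool) \<Rightarrow> (nat \<Rightarrow> bool)" where
  "vadd x y = (\<lambda>k. x k \<noteq> y k)"

definition vzero :: "nat \<Rightarrow> bool" where
  "vzero = (\<lambda>k. False)"

definition subspace :: "nat \<Rightarrow> (nat \<Rightarrow> bool) set \<Rightarrow> bool" where
  "subspace n W \<longleftrightarrow> W \<subseteq> vecs n \<and> vzero \<in> W \<and> (\<forall>x\<in>W. \<forall>y\<in>W. vadd x y \<in> W)"

definition dim :: "(nat \<Rightarrow> bool) set \<Rightarrow> nat" where
  "dim W = (THE d. card W = 2 ^ d)"

definition block :: "nat \<Rightarrow> nat \<Rightarrow> nat \<Rightarrow> (nat \<Rightarrow> bool) set" where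
  "block m b i = {x \<in> vecs (m * b). \<forall>k. x k \<longrightarrow> k div m = i}"

definition proj :: "nat \<Rightarrow> nat \<Rightarrow> (nat \<Rightarrow> bool) \<Rightarrow> (nat \<Rightarrow> bool)" where
  "proj m i x = (\<lambda>j. if j < m then x (i * m + j) else False)"

definition parallel :: "nat \<Rightarrow> nat \<Rightarrow> (nat \<Rightarrow> (nat \<Rightarrow> bool) \<Rightarrow> (nat \<Rightarrow> bool))
    \<Rightarrow> (nat \<Rightarrow> bool) \<Rightarrow> (nat \<Rightarrow> bool)" where
  "parallel m b g x = (\<lambda>k. if k < m * b then g (k div m) (proj m (k div m) x) (k mod m) else False)"

definition wall :: "nat \<Rightarrow> nat \<Rightarrow> (nat \<Rightarrow> bool) set \<Rightarrow> bool" where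
  "wall m b W \<longleftrightarrow> (\<exists>I. I \<noteq> {} \<and> I \<subset> {..<b} \<and>
      W = {x \<in> vecs (m * b). \<forall>k. x k \<longrightarrow> k div m \<in> I})"

definition JU :: "nat \<Rightarrow> nat \<Rightarrow> (nat \<Rightarrow> bool) set \<Rightarrow> nat set" where
  "JU m b U = {j. j < b \<and> block m b j \<inter> U \<subset> block m b j}"

definition hyperplane :: "nat \<Rightarrow> (nat \<Rightarrow> bool) set \<Rightarrow> bool" where
  "hyperplane n U \<longleftrightarrow> subspace n U \<and> dim U = n - 1"

definition diff_uniform :: "nat \<Rightarrow> ((nat \<Rightarrow> bool) \<Rightarrow> (nat \<Rightarrow> bool)) \<Rightarrow> nat \<Rightarrow> bool" where
  "diff_uniform m f \<delta> \<longleftrightarrow>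
     \<delta> = Max {card {x \<in> vecs m. vadd (f (vadd x a)) (f x) = c} | a c.
                a \<in> vecs m \<and> a \<noteq> vzero \<and> c \<in> vecs m}"

definition strongly_anti_invariant :: "nat \<Rightarrow> nat \<Rightarrow> ((nat \<Rightarrow> bool) \<Rightarrow> (nat \<Rightarrow> bool)) \<Rightarrow> bool" where
  "strongly_anti_invariant m r f \<longleftrightarrow> f vzero = vzero \<and> 1 \<le> r \<and> r < m \<and>
     (\<forall>A B. subspace m A \<and> subspace m B \<and> f ` A = B \<longrightarrow>
        (dim A = dim B \<and> dim A < m - r) \<or> (A = vecs m \<and> B = vecs m))"

definition coset :: "(nat \<Rightarrow> bool) set \<Rightarrow> (nat \<Rightarrow> bool) \<Rightarrow> (nat \<Rightarrow> bool) set" where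
  "coset W v = (\<lambda>w. vadd w v) ` W"

definition lin_part :: "nat \<Rightarrow> (nat \<Rightarrow> bool) set \<Rightarrow> (nat \<Rightarrow> bool) set set" where
  "lin_part n W = {coset W v | v. v \<in> vecs n}"

definition LA :: "nat \<Rightarrow> (nat \<Rightarrow> bool) set \<Rightarrow> (nat \<Rightarrow> bool) set \<Rightarrow> (nat \<Rightarrow> bool) set
    \<Rightarrow> (nat \<Rightarrow> bool) set set" where
  "LA n U W1 W2 = (let vbar = (SOME v. v \<in> vecs n - U) in
     {coset W1 v | v. v \<in> U} \<union> {coset (coset W2 vbar) v | v. v \<in> U})"

definition trivial_partition :: "nat \<Rightarrow> (nat \<Rightarrow> bool) set set \<Rightarrow> bool" where
  "trivial_partition n P \<longleftrightarrow> P = {{v} | v. v \<in> vecs n} \<or> P = {vecs n}"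

definition maps_onto :: "((nat \<Rightarrow> bool) \<Rightarrow> (nat \<Rightarrow> bool)) \<Rightarrow> (nat \<Rightarrow> bool) set set
    \<Rightarrow> (nat \<Rightarrow> bool) set set \<Rightarrow> bool" where
  "maps_onto f A B \<longleftrightarrow> (\<lambda>X. f ` X) ` A = B"

end

theory Submission
  imports Defs
begin



lemma vadd_comm: "vadd x y = vadd y x" by (auto simp: vadd_def)
lemma vadd_assoc: "vadd (vadd x y) z = vadd x (vadd y z)" by (auto simp: vadd_def)
lemma vadd_self[simp]: "vadd x x = vzero" by (auto simp: vadd_def vzero_def)
lemma vadd_zero[simp]: "vadd x vzero = x" "vadd vzero x = x" by (auto simp: vadd_def vzero_def)
lemma vadd_cancel[simp]: "vadd (vadd x y) y = x" "vadd x (vadd x y) = y" by (auto simp: vadd_def)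
lemma vadd_cancel2[simp]: "vadd (vadd y x) y = x" "vadd x (vadd y x) = y" by (auto simp: vadd_def)
lemma vadd_inj: "vadd x y = vadd x z \<longleftrightarrow> y = z" "vadd y x = vadd z x \<longleftrightarrow> y = z"
  by (metis vadd_cancel)+
lemma vecs_vadd[intro]: "x \<in> vecs n \<Longrightarrow> y \<in> vecs n \<Longrightarrow> vadd x y \<in> vecs n"
  by (auto simp: vecs_def vadd_def)
lemma vecs_zero[simp,intro]: "vzero \<in> vecs n" by (auto simp: vecs_def vzero_def)
lemma vadd_eq_zero: "vadd x y = vzero \<longleftrightarrow> x = y"
  by (metis vadd_cancel(1) vadd_self vadd_zero(2))

lemma vecs_eq_image: "vecs n = (\<lambda>S k. k \<in> S) ` Pow {..<n}"
proof
  show "vecs n \<subseteq> (\<lambda>S k. k \<in> S) ` Pow {..<n}"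
  proof
    fix x assume x: "x \<in> vecs n"
    have "x = (\<lambda>k. k \<in> {k. x k})" by auto
    moreover have "{k. x k} \<in> Pow {..<n}" using x by (auto simp: vecs_def not_less[symmetric])
    ultimately show "x \<in> (\<lambda>S k. k \<in> S) ` Pow {..<n}" by blast
  qed
  show "(\<lambda>S k. k \<in> S) ` Pow {..<n} \<subseteq> vecs n" by (auto simp: vecs_def)
qed

lemma card_vecs: "card (vecs n) = 2 ^ n"
proof -
  have "inj_on (\<lambda>S k. k \<in> S) (Pow {..<n})"
    by (rule inj_onI) (metis Collect_mem_eq)
  then show ?thesis by (simp add: vecs_eq_image card_image card_Pow)
qed

lemma finite_vecs[simp,intro]: "finite (vecs n)"
  by (simp add: vecs_eq_image)

lemma finite_sub: "W \<subseteq> vecs n \<Longrightarrow> finite W" using finite_subset by blast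

lemma coset_card: "finite W \<Longrightarrow> card (coset W v) = card W"
  unfolding coset_def by (rule card_image) (auto simp: inj_on_def vadd_inj)

lemma subspace_card_pow: "subspace n W \<Longrightarrow> \<exists>d. card W = 2 ^ d"
proof (induction n arbitrary: W)
  case 0
  then have "W = {vzero}" by (auto simp: subspace_def vecs_def vzero_def)
  then show ?case by (intro exI[of _ 0]) simp
next
  case (Suc n)
  define W0 where "W0 = {x \<in> W. \<not> x n}"
  have sub0: "subspace n W0" using Suc.prems
    unfolding subspace_def W0_def vecs_def
    by (auto simp: vzero_def vadd_def) (metis Suc_leI le_neq_implies_less subsetD mem_Collect_eq)
  then obtain d where d: "card W0 = 2 ^ d" using Suc.IH by blast
  show ?case
  proof (cases "\<exists>v\<in>W. v n")
    case False
    then have "W = W0" by (auto simp: W0_def)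
    then show ?thesis using d by blast
  next
    case True
    then obtain v where v: "v \<in> W" "v n" by blast
    have fin: "finite W0" using sub0 finite_sub unfolding subspace_def by blast
    have eq: "W = W0 \<union> coset W0 v"
    proof
      show "W \<subseteq> W0 \<union> coset W0 v"
      proof
        fix x assume x: "x \<in> W"
        show "x \<in> W0 \<union> coset W0 v"
        proof (cases "x n")
          case True
          have "vadd x v \<in> W0" using Suc.prems x v True
            by (auto simp: W0_def subspace_def vadd_def)
          then show ?thesis unfolding coset_def
            by (metis UnI2 image_eqI vadd_cancel(1))
        qed (use x in \<open>auto simp: W0_def\<close>)
      qed
      show "W0 \<union> coset W0 v \<subseteq> W" using Suc.prems v
        by (auto simp: W0_def coset_def subspace_def)
    qed
    have disj: "W0 \<inter> coset W0 v = {}"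
      using v by (auto simp: W0_def coset_def vadd_def)
    have "card W = card W0 + card (coset W0 v)"
      using eq disj fin by (simp add: card_Un_disjoint coset_def)
    then have "card W = 2 ^ Suc d" using coset_card[OF fin] d by simp
    then show ?thesis by blast
  qed
qed

lemma dim_card: "subspace n W \<Longrightarrow> card W = 2 ^ dim W"
proof -
  assume "subspace n W"
  then obtain d where d: "card W = 2 ^ d" using subspace_card_pow by blast
  have "dim W = d" unfolding dim_def
    by (rule the_equality) (use d in \<open>auto simp: power_inject_exp\<close>)
  then show ?thesis using d by simp
qed




lemma hyp_props:
  assumes h: "hyperplane n U" and n: "n > 0"
  shows "U \<subseteq> vecs n" "card U = 2 ^ (n - 1)" "U \<noteq> vecs n"
    "\<And>u v. u \<in> vecs n \<Longrightarrow> u \<notin> U \<Longrightarrow> v \<in> vecs n \<Longrightarrow> v \<notin> U \<Longrightarrow> vadd u v \<in> U"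
proof -
  have sub: "subspace n U" using h by (simp add: hyperplane_def)
  show U: "U \<subseteq> vecs n" using sub by (simp add: subspace_def)
  show cU: "card U = 2 ^ (n - 1)" using dim_card[OF sub] h by (simp add: hyperplane_def)
  have "(2::nat) ^ (n - 1) < 2 ^ n" using n by simp
  then show ne: "U \<noteq> vecs n" using cU card_vecs[of n] by auto
  fix u v assume u: "u \<in> vecs n" "u \<notin> U" and v: "v \<in> vecs n" "v \<notin> U"
  have finU: "finite U" using U finite_sub by blast
  have disj: "U \<inter> coset U v = {}"
  proof (rule ccontr)
    assume "U \<inter> coset U v \<noteq> {}"
    then obtain w where w: "w \<in> U" "vadd w v \<in> U" by (auto simp: coset_def)
    then have "vadd w (vadd w v) \<in> U" using sub unfolding subspace_def by blast
    then show False using v by simp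
  qed
  have cs: "coset U v \<subseteq> vecs n" using U v by (auto simp: coset_def)
  have "card (U \<union> coset U v) = 2 ^ (n - 1) + 2 ^ (n - 1)"
    using card_Un_disjoint[OF finU _ disj] coset_card[OF finU] cU n finU
    by (simp add: coset_def)
  also have "(2::nat) ^ (n - 1) + 2 ^ (n - 1) = 2 ^ n"
    using n by (cases n) auto
  finally have "card (U \<union> coset U v) = 2 ^ n" .
  then have "U \<union> coset U v = vecs n"
    using card_subset_eq[of "vecs n" "U \<union> coset U v"] cs U card_vecs by auto
  then have "u \<in> coset U v" using u by auto
  then obtain w where "w \<in> U" "u = vadd w v" by (auto simp: coset_def)
  then show "vadd u v \<in> U" by simp
qed

definition emb :: "nat \<Rightarrow> nat \<Rightarrow> (nat \<Rightarrow> bool) \<Rightarrow> (nat \<Rightarrow> bool)" where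
  "emb m i a = (\<lambda>k. k div m = i \<and> a (k mod m))"

definition Bl :: "(nat \<Rightarrow> bool) set \<Rightarrow> (nat \<Rightarrow> bool) set \<Rightarrow> (nat \<Rightarrow> bool) set \<Rightarrow> (nat \<Rightarrow> bool) \<Rightarrow> (nat \<Rightarrow> bool) set" where
  "Bl U W1 W2 x = (if x \<in> U then coset W1 x else coset W2 x)"

lemma proj_emb_same: "m > 0 \<Longrightarrow> a \<in> vecs m \<Longrightarrow> proj m i (emb m i a) = a"
  by (auto simp: proj_def emb_def vecs_def fun_eq_iff)

lemma proj_emb_other: "l \<noteq> i \<Longrightarrow> m > 0 \<Longrightarrow> proj m l (emb m i a) = vzero"
  by (auto simp: proj_def emb_def vzero_def fun_eq_iff)

lemma proj_vadd: "proj m i (vadd x y) = vadd (proj m i x) (proj m i y)"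
  by (auto simp: proj_def vadd_def fun_eq_iff)

lemma proj_zero[simp]: "proj m i vzero = vzero"
  by (auto simp: proj_def vzero_def fun_eq_iff)

lemma proj_vecs[simp,intro]: "proj m i x \<in> vecs m"
  by (auto simp: proj_def vecs_def)

lemma emb_vecs: "m > 0 \<Longrightarrow> a \<in> vecs m \<Longrightarrow> i < b \<Longrightarrow> emb m i a \<in> vecs (m * b)"
proof -
  assume m: "m > 0" and a: "a \<in> vecs m" and i: "i < b"
  { fix k assume k: "k \<ge> m * b" "emb m i a k"
    then have "k div m = i" by (simp add: emb_def)
    moreover have "k div m \<ge> (m * b) div m" using k(1) by (rule div_le_mono)
    moreover have "(m * b) div m = b" using m by simp
    ultimately have False using i by simp }
  then show ?thesis by (auto simp: vecs_def)
qed

lemma emb_vadd: "emb m i (vadd a c) = vadd (emb m i a) (emb m i c)"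
  by (auto simp: emb_def vadd_def fun_eq_iff)

lemma emb_zero[simp]: "emb m i vzero = vzero"
  by (auto simp: emb_def vzero_def fun_eq_iff)

lemma emb_inj: "m > 0 \<Longrightarrow> a \<in> vecs m \<Longrightarrow> c \<in> vecs m \<Longrightarrow> emb m i a = emb m i c \<Longrightarrow> a = c"
  by (metis proj_emb_same)

lemma vec_decomp:
  assumes m: "m > 0" and x: "x \<in> vecs (m * b)" and k: "k < m * b"
  shows "k div m < b" "x k = proj m (k div m) x (k mod m)"
proof -
  show "k div m < b" using k m by (simp add: div_less_iff_less_mult mult.commute)
  show "x k = proj m (k div m) x (k mod m)"
    using m by (simp add: proj_def mult.commute)
qed

lemma vec_ext:
  assumes m: "m > 0" and x: "x \<in> vecs (m * b)" and y: "y \<in> vecs (m * b)"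
    and e: "\<forall>i<b. proj m i x = proj m i y"
  shows "x = y"
proof
  fix k
  show "x k = y k"
  proof (cases "k < m * b")
    case True
    then show ?thesis using vec_decomp[OF m x True] vec_decomp[OF m y True] e by metis
  next
    case False
    then show ?thesis using x y by (auto simp: vecs_def)
  qed
qed

lemma block_iff:
  assumes m: "m > 0" and i: "i < b"
  shows "x \<in> block m b i \<longleftrightarrow> (\<exists>a\<in>vecs m. x = emb m i a)"
proof
  assume x: "x \<in> block m b i"
  then have xv: "x \<in> vecs (m * b)" by (simp add: block_def)
  have "x = emb m i (proj m i x)"
  proof
    fix k
    show "x k = emb m i (proj m i x) k"
    proof (cases "x k")
      case True
      then have "k div m = i" using x by (simp add: block_def)
      have "k div m * m + k mod m = k" by simp
      then show ?thesis using True m \<open>k div m = i\<close> by (simp add: emb_def proj_def)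
    next
      case False
      have "k div m * m + k mod m = k" by simp
      then show ?thesis using m False by (auto simp: emb_def proj_def)
    qed
  qed
  then show "\<exists>a\<in>vecs m. x = emb m i a" by blast
next
  assume "\<exists>a\<in>vecs m. x = emb m i a"
  then obtain a where a: "a \<in> vecs m" "x = emb m i a" by blast
  then show "x \<in> block m b i" using emb_vecs[OF m a(1) i] by (auto simp: block_def emb_def)
qed

lemma par_vecs: "parallel m b g v \<in> vecs (m * b)"
  by (auto simp: parallel_def vecs_def)

lemma proj_par:
  assumes m: "m > 0" and g: "g i ` vecs m \<subseteq> vecs m" and i: "i < b"
  shows "proj m i (parallel m b g v) = g i (proj m i v)"
proof
  fix j
  show "proj m i (parallel m b g v) j = g i (proj m i v) j"
  proof (cases "j < m")
    case True
    have "(i + 1) * m \<le> b * m" using i by (intro mult_le_mono1) simp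
    then have "i * m + j < m * b" using True by (simp add: mult.commute)
    moreover have "(i * m + j) div m = i" "(i * m + j) mod m = j" using True by auto
    ultimately show ?thesis using True by (simp add: proj_def parallel_def)
  next
    case False
    have "g i (proj m i v) \<in> vecs m" using g by blast
    then show ?thesis using False by (auto simp: proj_def vecs_def)
  qed
qed




definition uniform :: "nat \<Rightarrow> nat \<Rightarrow> ((nat \<Rightarrow> bool) \<Rightarrow> (nat \<Rightarrow> bool)) \<Rightarrow> bool" where
  "uniform m r f \<longleftrightarrow> (\<forall>a\<in>vecs m. \<forall>c. a \<noteq> vzero \<longrightarrow>
     card {x\<in>vecs m. vadd (f (vadd x a)) (f x) = c} \<le> 2 ^ r)"

definition AI :: "nat \<Rightarrow> nat \<Rightarrow> ((nat \<Rightarrow> bool) \<Rightarrow> (nat \<Rightarrow> bool)) \<Rightarrow> bool" where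
  "AI m r f \<longleftrightarrow> (\<forall>A B. subspace m A \<and> subspace m B \<and> f ` A = B \<longrightarrow>
        (dim A = dim B \<and> dim A < m - r) \<or> (A = vecs m \<and> B = vecs m))"

definition good :: "nat \<Rightarrow> nat \<Rightarrow> ((nat \<Rightarrow> bool) \<Rightarrow> (nat \<Rightarrow> bool)) \<Rightarrow> bool" where
  "good m r f \<longleftrightarrow> bij_betw f (vecs m) (vecs m) \<and> f vzero = vzero \<and> uniform m r f \<and> AI m r f"

lemma card_fibers:
  assumes fin: "finite S" and k: "\<And>c. card {x\<in>S. F x = c} \<le> k"
  shows "card S \<le> k * card (F ` S)"
proof -
  have e: "S = (\<Union>c\<in>F ` S. {x\<in>S. F x = c})" by auto
  have "card S = card (\<Union>c\<in>F ` S. {x\<in>S. F x = c})" by (rule arg_cong[OF e])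
  also have "\<dots> \<le> (\<Sum>c\<in>F ` S. card {x\<in>S. F x = c})"
    using card_UN_le[of "F ` S" "\<lambda>c. {x\<in>S. F x = c}"] fin by blast
  also have "\<dots> \<le> (\<Sum>c\<in>F ` S. k)" by (rule sum_mono) (rule k)
  also have "\<dots> = k * card (F ` S)" by simp
  finally show ?thesis .
qed

lemma good_inv:
  assumes g: "good m r f"
  shows "good m r (the_inv_into (vecs m) f)"
proof -
  define h where "h = the_inv_into (vecs m) f"
  have bij: "bij_betw f (vecs m) (vecs m)" and f0: "f vzero = vzero"
    and un: "uniform m r f" and ai: "AI m r f" using g by (auto simp: good_def)
  have inj: "inj_on f (vecs m)" using bij by (simp add: bij_betw_def)
  have hb: "bij_betw h (vecs m) (vecs m)" unfolding h_def by (rule bij_betw_the_inv_into[OF bij])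
  have fh: "\<And>y. y \<in> vecs m \<Longrightarrow> f (h y) = y" unfolding h_def
    using f_the_inv_into_f_bij_betw[OF bij] by blast
  have hf: "\<And>x. x \<in> vecs m \<Longrightarrow> h (f x) = x" unfolding h_def
    using the_inv_into_f_f[OF inj] by blast
  have hv: "\<And>y. y \<in> vecs m \<Longrightarrow> h y \<in> vecs m" using hb by (auto simp: bij_betw_def)
  have fv: "\<And>y. y \<in> vecs m \<Longrightarrow> f y \<in> vecs m" using bij by (auto simp: bij_betw_def)
  have h0: "h vzero = vzero" using hf[of vzero] f0 by simp
  have uh: "uniform m r h" unfolding uniform_def
  proof (intro ballI allI impI)
    fix t c assume t: "t \<in> vecs m" "t \<noteq> vzero"
    define Sh where "Sh = {y \<in> vecs m. vadd (h (vadd y t)) (h y) = c}"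
    define Sf where "Sf = {x \<in> vecs m. vadd (f (vadd x c)) (f x) = t}"
    show "card Sh \<le> 2 ^ r"
    proof (cases "Sh = {}")
      case True then show ?thesis by simp
    next
      case False
      then obtain y0 where y0: "y0 \<in> vecs m" "vadd (h (vadd y0 t)) (h y0) = c" by (auto simp: Sh_def)
      have a1: "vadd y0 t \<in> vecs m" using vecs_vadd[OF y0(1) t(1)] .
      have cv: "c \<in> vecs m" using y0(2) vecs_vadd[OF hv[OF a1] hv[OF y0(1)]] by simp
      have c0: "c \<noteq> vzero"
      proof
        assume "c = vzero"
        then have "h (vadd y0 t) = h y0" using y0 by (simp add: vadd_eq_zero)
        then have "f (h (vadd y0 t)) = f (h y0)" by simp
        then have "vadd y0 t = y0" using fh[of y0] fh[of "vadd y0 t"] y0 t vecs_vadd[of y0 m t] by auto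
        then show False using t vadd_cancel(2)[of y0 t] by simp
      qed
      have "Sh \<subseteq> f ` Sf"
      proof
        fix y assume y: "y \<in> Sh"
        then have yv: "y \<in> vecs m" and e: "vadd (h (vadd y t)) (h y) = c" by (auto simp: Sh_def)
        have "vadd c (h y) = h (vadd y t)" by (simp add: e[symmetric])
        then have "vadd (h y) c = h (vadd y t)" by (simp add: vadd_comm)
        moreover have "vadd y t \<in> vecs m" using yv t by blast
        ultimately have "f (vadd (h y) c) = vadd y t" using fh by simp
        then have "vadd (f (vadd (h y) c)) (f (h y)) = t" using fh yv by (simp add: vadd_comm)
        then have "h y \<in> Sf" using hv yv by (simp add: Sf_def)
        then show "y \<in> f ` Sf" using fh[OF yv] by (intro rev_image_eqI) auto
      qed
      then have "card Sh \<le> card (f ` Sf)" by (intro card_mono) (auto simp: Sf_def)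
      also have "\<dots> \<le> card Sf" by (rule card_image_le) (simp add: Sf_def)
      also have "\<dots> \<le> 2 ^ r" using un cv c0 unfolding uniform_def Sf_def by blast
      finally show ?thesis .
    qed
  qed
  have aih: "AI m r h" unfolding AI_def
  proof (intro allI impI)
    fix A B assume ab: "subspace m A \<and> subspace m B \<and> h ` A = B"
    have "f ` B = A"
    proof -
      have As: "A \<subseteq> vecs m" using ab by (simp add: subspace_def)
      have "f ` B = (\<lambda>y. f (h y)) ` A" using ab by (simp add: image_image[symmetric])
      also have "\<dots> = (\<lambda>y. y) ` A" by (rule image_cong) (use As fh in auto)
      finally show ?thesis by simp
    qed
    moreover have "subspace m B \<and> subspace m A \<and> f ` B = A \<longrightarrow>
        (dim B = dim A \<and> dim B < m - r) \<or> (B = vecs m \<and> A = vecs m)"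
      using ai unfolding AI_def by blast
    ultimately show "(dim A = dim B \<and> dim A < m - r) \<or> (A = vecs m \<and> B = vecs m)"
      using ab by auto
  qed
  show ?thesis using hb h0 uh aih unfolding good_def h_def by blast
qed




lemma good_vecs: "good m r f \<Longrightarrow> x \<in> vecs m \<Longrightarrow> f x \<in> vecs m"
  by (auto simp: good_def bij_betw_def)

lemma good_img: "good m r f \<Longrightarrow> f ` vecs m \<subseteq> vecs m"
  by (auto simp: good_def bij_betw_def)

lemma good_inj: "good m r f \<Longrightarrow> x \<in> vecs m \<Longrightarrow> y \<in> vecs m \<Longrightarrow> f x = f y \<Longrightarrow> x = y"
  by (auto simp: good_def bij_betw_def inj_on_def)

lemma good_zero: "good m r f \<Longrightarrow> f vzero = vzero"
  by (auto simp: good_def)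

lemma good_zero_iff: "good m r f \<Longrightarrow> x \<in> vecs m \<Longrightarrow> f x = vzero \<longleftrightarrow> x = vzero"
  using good_inj[of m r f x vzero] good_zero[of m r f] by auto

locale par =
  fixes m b r :: nat and g :: "nat \<Rightarrow> (nat \<Rightarrow> bool) \<Rightarrow> (nat \<Rightarrow> bool)"
  assumes m: "m > 0" and gg: "\<forall>i<b. good m r (g i)"
begin

abbreviation "G \<equiv> parallel m b g"

lemma gi: "i < b \<Longrightarrow> good m r (g i)" using gg by blast

lemma projG: assumes i: "i < b" shows "proj m i (G v) = g i (proj m i v)"
  using proj_par[of m g i b v, OF m good_img[OF gi[OF i]] i] .

lemma G_zero: "G vzero = vzero"
  by (rule vec_ext[OF m par_vecs]) (auto simp: projG good_zero[OF gi])

lemma G_emb: "a \<in> vecs m \<Longrightarrow> i < b \<Longrightarrow> G (emb m i a) = emb m i (g i a)"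
proof (rule vec_ext[OF m par_vecs])
  assume a: "a \<in> vecs m" and i: "i < b"
  show "emb m i (g i a) \<in> vecs (m * b)" using emb_vecs[OF m good_vecs[OF gi[OF i] a] i] .
  show "\<forall>l<b. proj m l (G (emb m i a)) = proj m l (emb m i (g i a))"
  proof (intro allI impI)
    fix l assume l: "l < b"
    show "proj m l (G (emb m i a)) = proj m l (emb m i (g i a))"
    proof (cases "l = i")
      case True
      then show ?thesis using projG[OF l] a proj_emb_same[OF m] good_vecs[OF gi[OF i] a] by simp
    next
      case False
      then show ?thesis using projG[OF l] proj_emb_other[OF False m] good_zero[OF gi[OF l]] by simp
    qed
  qed
qed

lemma G_shift:
  assumes x: "x \<in> vecs m" and i: "i < b"
  shows "G (vadd v (emb m i x)) =
    vadd (G v) (emb m i (vadd (g i (vadd (proj m i v) x)) (g i (proj m i v))))"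
proof (rule vec_ext[OF m par_vecs])
  have d: "vadd (g i (vadd (proj m i v) x)) (g i (proj m i v)) \<in> vecs m"
    using good_vecs[OF gi[OF i]] x by (intro vecs_vadd) auto
  show "vadd (G v) (emb m i (vadd (g i (vadd (proj m i v) x)) (g i (proj m i v)))) \<in> vecs (m * b)"
    using emb_vecs[OF m d i] par_vecs by (intro vecs_vadd)
  show "\<forall>l<b. proj m l (G (vadd v (emb m i x))) =
      proj m l (vadd (G v) (emb m i (vadd (g i (vadd (proj m i v) x)) (g i (proj m i v)))))"
  proof (intro allI impI)
    fix l assume l: "l < b"
    show "proj m l (G (vadd v (emb m i x))) =
      proj m l (vadd (G v) (emb m i (vadd (g i (vadd (proj m i v) x)) (g i (proj m i v)))))"
    proof (cases "l = i")
      case True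
      then show ?thesis using projG[OF l] proj_vadd proj_emb_same[OF m x] proj_emb_same[OF m d]
        by (simp add: vadd_assoc[symmetric] vadd_comm)
    next
      case False
      then show ?thesis using projG[OF l] proj_vadd proj_emb_other[OF False m] by simp
    qed
  qed
qed

lemma G_inj: "inj_on G (vecs (m * b))"
proof (rule inj_onI)
  fix x y assume x: "x \<in> vecs (m * b)" and y: "y \<in> vecs (m * b)" and e: "G x = G y"
  show "x = y"
  proof (rule vec_ext[OF m x y], intro allI impI)
    fix i assume i: "i < b"
    have "g i (proj m i x) = g i (proj m i y)" using e projG[OF i] by metis
    then show "proj m i x = proj m i y" using good_inj[OF gi[OF i]] by blast
  qed
qed

lemma G_vecs: "G v \<in> vecs (m * b)" by (rule par_vecs)

definition ginv where "ginv i = the_inv_into (vecs m) (g i)"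

lemma ginv_good: "\<forall>i<b. good m r (ginv i)"
  unfolding ginv_def using good_inv gi by blast

lemma ginv_g: "i < b \<Longrightarrow> x \<in> vecs m \<Longrightarrow> ginv i (g i x) = x"
  unfolding ginv_def using the_inv_into_f_f gi by (metis good_def bij_betw_def)

lemma g_ginv: "i < b \<Longrightarrow> y \<in> vecs m \<Longrightarrow> g i (ginv i y) = y"
  unfolding ginv_def using f_the_inv_into_f_bij_betw gi by (metis good_def)

interpretation inv: par m b r ginv
  using m ginv_good by unfold_locales auto

lemma Gi_G: assumes x: "x \<in> vecs (m * b)" shows "inv.G (G x) = x"
proof (rule vec_ext[OF m par_vecs x], intro allI impI)
  fix i assume i: "i < b"
  show "proj m i (inv.G (G x)) = proj m i x"
    using inv.projG[OF i] projG[OF i] ginv_g[OF i] by simp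
qed

lemma G_Gi: assumes y: "y \<in> vecs (m * b)" shows "G (inv.G y) = y"
proof (rule vec_ext[OF m par_vecs y], intro allI impI)
  fix i assume i: "i < b"
  show "proj m i (G (inv.G y)) = proj m i y"
    using inv.projG[OF i] projG[OF i] g_ginv[OF i] by simp
qed

end




definition LAdata :: "nat \<Rightarrow> (nat \<Rightarrow> bool) set \<Rightarrow> (nat \<Rightarrow> bool) set \<Rightarrow> (nat \<Rightarrow> bool) set \<Rightarrow> bool" where
  "LAdata n U W1 W2 \<longleftrightarrow> hyperplane n U \<and> subspace n W1 \<and> subspace n W2 \<and> W1 \<subseteq> U \<and> W2 \<subseteq> U"

lemma coset_zero[simp]: "coset W vzero = W"
  by (simp add: coset_def)

lemma coset_coset: "coset (coset W a) v = coset W (vadd a v)"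
  unfolding coset_def image_image vadd_assoc by (rule refl)

lemma coset_mem: "vzero \<in> W \<Longrightarrow> v \<in> coset W v"
  unfolding coset_def by (rule image_eqI[of _ _ vzero]) auto

lemma coset_vecs: "W \<subseteq> vecs n \<Longrightarrow> v \<in> vecs n \<Longrightarrow> coset W v \<subseteq> vecs n"
proof
  fix z assume W: "W \<subseteq> vecs n" and v: "v \<in> vecs n" and z: "z \<in> coset W v"
  from z obtain w where w: "w \<in> W" "z = vadd w v" by (auto simp: coset_def)
  have "w \<in> vecs n" using W w(1) by (rule subsetD)
  from vecs_vadd[OF this v] show "z \<in> vecs n" using w(2) by simp
qed

lemma sub_add: "subspace n U \<Longrightarrow> a \<in> U \<Longrightarrow> c \<in> U \<Longrightarrow> vadd a c \<in> U"
  unfolding subspace_def by blast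

lemma coset_eq:
  assumes W: "subspace n W" and y: "y \<in> coset W v"
  shows "coset W y = coset W v"
proof -
  from y obtain w where w: "w \<in> W" "y = vadd w v" by (auto simp: coset_def)
  show ?thesis
  proof
    show "coset W y \<subseteq> coset W v"
    proof
      fix z assume "z \<in> coset W y"
      then obtain w' where w': "w' \<in> W" "z = vadd w' y" by (auto simp: coset_def)
      have e: "z = vadd (vadd w' w) v" using w'(2) w(2) by (simp add: vadd_assoc)
      have "vadd w' w \<in> W" using sub_add[OF W w'(1) w(1)] .
      then show "z \<in> coset W v" unfolding coset_def by (rule rev_image_eqI) (simp add: e)
    qed
    show "coset W v \<subseteq> coset W y"
    proof
      fix z assume "z \<in> coset W v"
      then obtain w' where w': "w' \<in> W" "z = vadd w' v" by (auto simp: coset_def)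
      have e: "z = vadd (vadd w' w) y" using w'(2) w(2) by (simp add: vadd_assoc)
      have "vadd w' w \<in> W" using sub_add[OF W w'(1) w(1)] .
      then show "z \<in> coset W y" unfolding coset_def by (rule rev_image_eqI) (simp add: e)
    qed
  qed
qed

lemma coset_in: "subspace n U \<Longrightarrow> W \<subseteq> U \<Longrightarrow> v \<in> U \<Longrightarrow> coset W v \<subseteq> U"
proof
  fix z assume U: "subspace n U" and W: "W \<subseteq> U" and v: "v \<in> U" and z: "z \<in> coset W v"
  from z obtain w where w: "w \<in> W" "z = vadd w v" by (auto simp: coset_def)
  have "w \<in> U" using W w(1) by (rule subsetD)
  from sub_add[OF U this v] show "z \<in> U" using w(2) by simp
qed

lemma coset_out: "subspace n U \<Longrightarrow> W \<subseteq> U \<Longrightarrow> v \<notin> U \<Longrightarrow> y \<in> coset W v \<Longrightarrow> y \<notin> U"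
proof
  assume U: "subspace n U" and W: "W \<subseteq> U" and v: "v \<notin> U" and y: "y \<in> coset W v" and yU: "y \<in> U"
  from y obtain w where w: "w \<in> W" "y = vadd w v" by (auto simp: coset_def)
  have "w \<in> U" using W w(1) by (rule subsetD)
  from sub_add[OF U this yU] have "vadd w y \<in> U" .
  then show False using w(2) v by simp
qed

lemma coset_cancel: "coset A e = coset B e \<Longrightarrow> A = B"
proof -
  assume e: "coset A e = coset B e"
  have "A = (\<lambda>w. vadd w e) ` coset A e" unfolding coset_def image_image by simp
  also have "\<dots> = (\<lambda>w. vadd w e) ` coset B e" by (simp only: e)
  also have "\<dots> = B" unfolding coset_def image_image by simp
  finally show ?thesis .
qed




context
  fixes n U W1 W2
  assumes D: "LAdata n U W1 W2" and n: "n > 0"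
begin

lemma D_hyp: "hyperplane n U" using D by (simp add: LAdata_def)
lemma D_U: "subspace n U" using D by (simp add: LAdata_def hyperplane_def)
lemma D_W1: "subspace n W1" using D by (simp add: LAdata_def)
lemma D_W2: "subspace n W2" using D by (simp add: LAdata_def)
lemma D_W1U: "W1 \<subseteq> U" using D by (simp add: LAdata_def)
lemma D_W2U: "W2 \<subseteq> U" using D by (simp add: LAdata_def)
lemma D_Uv: "U \<subseteq> vecs n" using hyp_props(1)[OF D_hyp n] .
lemma D_ne: "U \<noteq> vecs n" using hyp_props(3)[OF D_hyp n] .
lemma D_compl: "u \<in> vecs n \<Longrightarrow> u \<notin> U \<Longrightarrow> v \<in> vecs n \<Longrightarrow> v \<notin> U \<Longrightarrow> vadd u v \<in> U"
  using hyp_props(4)[OF D_hyp n] by blast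

lemma vb: "(SOME v. v \<in> vecs n - U) \<in> vecs n - U"
proof -
  have "\<exists>v. v \<in> vecs n - U" using D_ne D_Uv by blast
  then show ?thesis by (rule someI_ex)
qed

lemma Bl_vecs: "x \<in> vecs n \<Longrightarrow> Bl U W1 W2 x \<subseteq> vecs n"
  using coset_vecs D_W1 D_W2 by (auto simp: Bl_def subspace_def)

lemma Bl_mem: "x \<in> Bl U W1 W2 x"
  using coset_mem D_W1 D_W2 by (auto simp: Bl_def subspace_def)

lemma Bl_unique:
  assumes y: "y \<in> Bl U W1 W2 x"
  shows "Bl U W1 W2 y = Bl U W1 W2 x"
proof (cases "x \<in> U")
  case True
  then have "y \<in> coset W1 x" using y by (simp add: Bl_def)
  moreover then have "y \<in> U" using coset_in[OF D_U D_W1U True] by blast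
  ultimately show ?thesis using True coset_eq[OF D_W1] by (simp add: Bl_def)
next
  case False
  then have "y \<in> coset W2 x" using y by (simp add: Bl_def)
  moreover then have "y \<notin> U" using coset_out[OF D_U D_W2U False] by blast
  ultimately show ?thesis using False coset_eq[OF D_W2] by (simp add: Bl_def)
qed

lemma LA_eq: "LA n U W1 W2 = {Bl U W1 W2 x | x. x \<in> vecs n}"
proof -
  define vbar where "vbar = (SOME v. v \<in> vecs n - U)"
  have vbar: "vbar \<in> vecs n" "vbar \<notin> U" using vb by (auto simp: vbar_def)
  have "LA n U W1 W2 = {coset W1 v | v. v \<in> U} \<union> {coset (coset W2 vbar) v | v. v \<in> U}"
    by (simp add: LA_def vbar_def Let_def)
  also have "\<dots> = {Bl U W1 W2 x | x. x \<in> vecs n}"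
  proof
    show "{coset W1 v | v. v \<in> U} \<union> {coset (coset W2 vbar) v | v. v \<in> U} \<subseteq> {Bl U W1 W2 x | x. x \<in> vecs n}"
    proof
      fix X assume "X \<in> {coset W1 v | v. v \<in> U} \<union> {coset (coset W2 vbar) v | v. v \<in> U}"
      then consider v where "v \<in> U" "X = coset W1 v" | v where "v \<in> U" "X = coset (coset W2 vbar) v" by blast
      then show "X \<in> {Bl U W1 W2 x | x. x \<in> vecs n}"
      proof cases
        case 1
        have "v \<in> vecs n" using 1 D_Uv by blast
        moreover have "X = Bl U W1 W2 v" using 1 by (simp add: Bl_def)
        ultimately show ?thesis by blast
      next
        case 2
        have nu: "vadd vbar (v) \<notin> U"
        proof
          assume "vadd vbar v \<in> U"
          then have "vadd (vadd vbar v) v \<in> U" using 2 D_U unfolding subspace_def by blast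
          then show False using vbar by simp
        qed
        have "vadd vbar v \<in> vecs n" using vbar 2 D_Uv by (intro vecs_vadd) auto
        moreover have "X = Bl U W1 W2 (vadd vbar v)" using 2 nu by (simp add: Bl_def coset_coset)
        ultimately show ?thesis by blast
      qed
    qed
    show "{Bl U W1 W2 x | x. x \<in> vecs n} \<subseteq> {coset W1 v | v. v \<in> U} \<union> {coset (coset W2 vbar) v | v. v \<in> U}"
    proof
      fix X assume "X \<in> {Bl U W1 W2 x | x. x \<in> vecs n}"
      then obtain x where x: "x \<in> vecs n" "X = Bl U W1 W2 x" by blast
      show "X \<in> {coset W1 v | v. v \<in> U} \<union> {coset (coset W2 vbar) v | v. v \<in> U}"
      proof (cases "x \<in> U")
        case True
        then have "X = coset W1 x" using x by (simp add: Bl_def)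
        then show ?thesis using True by blast
      next
        case False
        have u: "vadd vbar x \<in> U" using D_compl[OF vbar(1,2) x(1) False] .
        have "X = coset (coset W2 vbar) (vadd vbar x)" using x False
          by (simp add: Bl_def coset_coset vadd_assoc[symmetric])
        then show ?thesis using u by blast
      qed
    qed
  qed
  finally show ?thesis .
qed

end

lemma blockmap:
  assumes D: "LAdata n U W1 W2" and D': "LAdata n U' W1' W2'" and n: "n > 0"
    and F: "\<And>x. F x \<in> vecs n"
    and maps: "maps_onto F (LA n U W1 W2) (LA n U' W1' W2')"
    and x: "x \<in> vecs n"
  shows "F ` Bl U W1 W2 x = Bl U' W1' W2' (F x)"
proof -
  have "Bl U W1 W2 x \<in> LA n U W1 W2" unfolding LA_eq[OF D n] using x by blast
  then have "F ` Bl U W1 W2 x \<in> (\<lambda>X. F ` X) ` LA n U W1 W2" by (rule imageI)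
  then have "F ` Bl U W1 W2 x \<in> LA n U' W1' W2'" using maps unfolding maps_onto_def by simp
  then obtain x' where x': "x' \<in> vecs n" "F ` Bl U W1 W2 x = Bl U' W1' W2' x'"
    unfolding LA_eq[OF D' n] by blast
  have "F x \<in> Bl U' W1' W2' x'" using x' Bl_mem[OF D n, of x] by blast
  then have "Bl U' W1' W2' (F x) = Bl U' W1' W2' x'" by (rule Bl_unique[OF D' n])
  then show ?thesis using x'(2) by simp
qed

lemma blockmap_inv:
  assumes D: "LAdata n U W1 W2" and n: "n > 0"
    and FiF: "\<And>x. x \<in> vecs n \<Longrightarrow> Fi (F x) = x"
    and FFi: "\<And>y. y \<in> vecs n \<Longrightarrow> F (Fi y) = y"
    and Fi: "\<And>y. Fi y \<in> vecs n"
    and bm: "\<And>x. x \<in> vecs n \<Longrightarrow> F ` Bl U W1 W2 x = Bl U' W1' W2' (F x)"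
    and y: "y \<in> vecs n"
  shows "Fi ` Bl U' W1' W2' y = Bl U W1 W2 (Fi y)"
proof -
  have "Bl U' W1' W2' y = F ` Bl U W1 W2 (Fi y)" using bm[OF Fi] FFi[OF y] by simp
  then have "Fi ` Bl U' W1' W2' y = (\<lambda>z. Fi (F z)) ` Bl U W1 W2 (Fi y)" by (simp add: image_image)
  also have "\<dots> = (\<lambda>z. z) ` Bl U W1 W2 (Fi y)"
    by (rule image_cong) (use Bl_vecs[OF D n Fi] FiF in auto)
  finally show ?thesis by simp
qed

lemma LA_lin:
  assumes D: "LAdata n U W W" and n: "n > 0"
  shows "LA n U W W = lin_part n W"
proof -
  have "\<And>x. Bl U W W x = coset W x" by (simp add: Bl_def)
  then show ?thesis using LA_eq[OF D n] by (simp add: lin_part_def)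
qed




lemma vadd_left_comm: "vadd x (vadd y z) = vadd y (vadd x z)"
  by (auto simp: vadd_def)

lemmas vadd_ac = vadd_assoc vadd_comm vadd_left_comm

lemma coset_memI: "vadd z v \<in> W \<Longrightarrow> z \<in> coset W v"
  unfolding coset_def by (rule image_eqI[of _ _ "vadd z v"]) simp_all

lemma coset_memD: "z \<in> coset W v \<Longrightarrow> vadd z v \<in> W"
  unfolding coset_def by auto

lemma dcount:
  assumes g: "good m r f" and a: "a \<in> vecs m" "a \<noteq> vzero"
  shows "2 ^ m \<le> 2 ^ r * card ((\<lambda>x. vadd (f (vadd x a)) (f x)) ` vecs m)"
proof -
  have "\<And>c. card {x\<in>vecs m. vadd (f (vadd x a)) (f x) = c} \<le> 2 ^ r"
    using g a unfolding good_def uniform_def by blast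
  from card_fibers[OF finite_vecs this] show ?thesis by (simp add: card_vecs)
qed

lemma AI_small:
  assumes g: "good m r f" and A: "subspace m A" and A': "subspace m A'" and fA: "f ` A = A'"
    and ne: "A \<noteq> vecs m"
  shows "2 ^ r * card A' \<le> 2 ^ (m - 1)" "card A = card A'" "r < m"
proof -
  have "(dim A = dim A' \<and> dim A < m - r) \<or> (A = vecs m \<and> A' = vecs m)"
    using g A A' fA unfolding good_def AI_def by blast
  then have d: "dim A = dim A'" "dim A' < m - r" using ne by auto
  show "r < m" using d by simp
  have "2 ^ r * card A' = (2::nat) ^ (r + dim A')" using dim_card[OF A'] by (simp add: power_add)
  also have "\<dots> \<le> 2 ^ (m - 1)" using d by (intro power_increasing) auto
  finally show "2 ^ r * card A' \<le> 2 ^ (m - 1)" .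
  show "card A = card A'" using dim_card[OF A] dim_card[OF A'] d by simp
qed

lemma comp_full:
  assumes g: "good m r f" and a: "a \<in> vecs m" "a \<noteq> vzero"
    and A: "subspace m A" and A': "subspace m A'" and fA: "f ` A = A'"
    and h: "\<And>x. x \<in> vecs m \<Longrightarrow> vadd (vadd (f (vadd a x)) (f x)) (f a) \<in> A'"
  shows "A = vecs m"
proof (rule ccontr)
  assume ne: "A \<noteq> vecs m"
  have fin: "finite A'" using A' finite_sub by (auto simp: subspace_def)
  have "(\<lambda>x. vadd (f (vadd x a)) (f x)) ` vecs m \<subseteq> coset A' (f a)"
  proof
    fix z assume "z \<in> (\<lambda>x. vadd (f (vadd x a)) (f x)) ` vecs m"
    then obtain x where x: "x \<in> vecs m" "z = vadd (f (vadd x a)) (f x)" by blast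
    have "vadd z (f a) \<in> A'" using h[OF x(1)] x(2) by (simp add: vadd_comm)
    then show "z \<in> coset A' (f a)" by (rule coset_memI)
  qed
  then have "card ((\<lambda>x. vadd (f (vadd x a)) (f x)) ` vecs m) \<le> card (coset A' (f a))"
    by (rule card_mono[rotated]) (simp add: coset_def fin)
  also have "\<dots> = card A'" by (rule coset_card[OF fin])
  finally have "card ((\<lambda>x. vadd (f (vadd x a)) (f x)) ` vecs m) \<le> card A'" .
  then have "2 ^ m \<le> 2 ^ r * card A'" using dcount[OF g a] by (meson le_trans mult_le_mono2)
  also have "\<dots> \<le> 2 ^ (m - 1)" using AI_small[OF g A A' fA ne] by simp
  finally have "(2::nat) ^ m \<le> 2 ^ (m - 1)" .
  moreover have "(2::nat) ^ (m - 1) < 2 ^ m"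
    using AI_small(3)[OF g A A' fA ne] by (intro power_strict_increasing) auto
  ultimately show False by linarith
qed

lemma comp_C1:
  assumes g: "good m r f"
    and H: "H \<subseteq> vecs m" "vzero \<in> H" and xo: "xo \<in> vecs m" "xo \<notin> H"
    and compl: "\<And>x y. x \<in> vecs m \<Longrightarrow> x \<notin> H \<Longrightarrow> y \<in> vecs m \<Longrightarrow> y \<notin> H \<Longrightarrow> vadd x y \<in> H"
    and P: "subspace m P" and Q: "subspace m Q" and P': "subspace m P'" and fP: "f ` P = P'"
    and A: "subspace m A" "A \<subseteq> H" and A': "subspace m A'" and fA: "f ` A = A'"
    and h4: "\<And>x. x \<in> vecs m \<Longrightarrow> f ` coset (if x \<in> H then P else Q) x = coset P' (f x)"
    and h5: "\<And>a x. a \<in> P \<Longrightarrow> x \<in> H \<Longrightarrow> vadd (vadd (f (vadd a x)) (f x)) (f a) \<in> A'"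
  shows "P = {vzero}"
proof -
  have Pne: "P \<noteq> vecs m"
  proof
    assume Pv: "P = vecs m"
    have xnz: "xo \<noteq> vzero" using H(2) xo(2) by auto
    have "A = vecs m"
    proof (rule comp_full[OF g xo(1) xnz A(1) A' fA])
      fix x assume x: "x \<in> vecs m"
      show "vadd (vadd (f (vadd xo x)) (f x)) (f xo) \<in> A'"
      proof (cases "x \<in> H")
        case True then show ?thesis using h5[of xo x] Pv xo by simp
      next
        case False
        then have xx: "vadd x xo \<in> H" using compl[OF x False xo] by simp
        have 1: "vadd (vadd (f x) (f (vadd x xo))) (f xo) \<in> A'"
          using h5[of xo "vadd x xo"] xx Pv xo by simp
        have "vadd x xo = vadd xo x" by (rule vadd_comm)
        moreover have "vadd (f x) (f (vadd xo x)) = vadd (f (vadd xo x)) (f x)" by (rule vadd_comm)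
        ultimately show ?thesis using 1 by simp
      qed
    qed
    then show False using A(2) xo by auto
  qed
  note sm = AI_small[OF g P P' fP Pne]
  have Pv: "P \<subseteq> vecs m" and Qv: "Q \<subseteq> vecs m" and P'v: "P' \<subseteq> vecs m"
    using P Q P' by (auto simp: subspace_def)
  have finP: "finite P" and finQ: "finite Q" and finP': "finite P'"
    using Pv Qv P'v finite_sub by blast+
  have inj: "inj_on f (vecs m)" using g by (auto simp: good_def bij_betw_def)
  have cQ: "card Q = card P'"
  proof -
    have e: "f ` coset Q xo = coset P' (f xo)" using h4[OF xo(1)] xo(2) by simp
    have "coset Q xo \<subseteq> vecs m" using coset_vecs[OF Qv xo(1)] .
    then have "card (f ` coset Q xo) = card (coset Q xo)"
      using inj by (intro card_image) (rule inj_on_subset)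
    then show ?thesis using e coset_card[OF finQ] coset_card[OF finP'] by simp
  qed
  have P'0: "P' \<subseteq> {vzero}"
  proof
    fix t assume t: "t \<in> P'"
    show "t \<in> {vzero}"
    proof (rule ccontr)
      assume "t \<notin> {vzero}"
      then have t0: "t \<noteq> vzero" by simp
      have tv: "t \<in> vecs m" using t P'v by blast
      define h where "h = the_inv_into (vecs m) f"
      have gh: "good m r h" unfolding h_def by (rule good_inv[OF g])
      have bij: "bij_betw f (vecs m) (vecs m)" using g by (simp add: good_def)
      have fh: "\<And>y. y \<in> vecs m \<Longrightarrow> f (h y) = y" unfolding h_def
        using f_the_inv_into_f_bij_betw[OF bij] by blast
      have hf: "\<And>x. x \<in> vecs m \<Longrightarrow> h (f x) = x" unfolding h_def
        using the_inv_into_f_f[OF inj] by blast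
      have hv: "\<And>y. y \<in> vecs m \<Longrightarrow> h y \<in> vecs m" using good_vecs[OF gh] .
      have img: "(\<lambda>y. vadd (h (vadd y t)) (h y)) ` vecs m \<subseteq> (P \<union> Q) - {vzero}"
      proof
        fix z assume "z \<in> (\<lambda>y. vadd (h (vadd y t)) (h y)) ` vecs m"
        then obtain y where y: "y \<in> vecs m" "z = vadd (h (vadd y t)) (h y)" by blast
        define x where "x = h y"
        have xv: "x \<in> vecs m" and fx: "f x = y" using hv fh y(1) by (auto simp: x_def)
        define R where "R = (if x \<in> H then P else Q)"
        have Rv: "R \<subseteq> vecs m" using Pv Qv by (simp add: R_def)
        have "vadd t y \<in> coset P' (f x)" using t fx by (intro coset_memI) simp
        then have "vadd t y \<in> f ` coset R x" using h4[OF xv] by (simp add: R_def)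
        then obtain z' where z': "z' \<in> coset R x" "vadd t y = f z'" by blast
        have z'v: "z' \<in> vecs m" using coset_vecs[OF Rv xv] z'(1) by blast
        have hz: "h (vadd y t) = z'" using hf[OF z'v] z'(2) by (simp add: vadd_comm)
        have zR: "z \<in> R" using coset_memD[OF z'(1)] y(2) hz by (simp add: x_def)
        have "z \<noteq> vzero"
        proof
          assume "z = vzero"
          then have "z' = x" using y(2) hz by (simp add: x_def vadd_eq_zero)
          then have "vadd t y = y" using z'(2) fx by simp
          then show False using t0 vadd_cancel(1)[of t y] by simp
        qed
        then show "z \<in> (P \<union> Q) - {vzero}" using zR by (auto simp: R_def split: if_splits)
      qed
      have c0: "vzero \<in> P" "vzero \<in> Q" using P Q by (auto simp: subspace_def)
      have "card (P \<union> Q) + card (P \<inter> Q) = card P + card Q"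
        using card_Un_Int[OF finP finQ] by simp
      moreover have "card (P \<inter> Q) \<ge> 1"
        using c0 finP by (metis IntI One_nat_def Suc_leI card_gt_0_iff empty_iff finite_Int)
      ultimately have cu: "card (P \<union> Q) \<le> 2 * card P' - 1" using sm(2) cQ by linarith
      have "card ((P \<union> Q) - {vzero}) = card (P \<union> Q) - 1"
        using c0 finP finQ by (simp add: card_Diff_singleton)
      then have cd: "card ((P \<union> Q) - {vzero}) \<le> 2 * card P' - 2" using cu by linarith
      have "card ((\<lambda>y. vadd (h (vadd y t)) (h y)) ` vecs m) \<le> card ((P \<union> Q) - {vzero})"
        using img finP finQ by (intro card_mono) auto
      then have ci: "card ((\<lambda>y. vadd (h (vadd y t)) (h y)) ` vecs m) \<le> 2 * card P' - 2"
        using cd by linarith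
      have cp1: "card P' \<ge> 1" using sm(2) c0(1) finP by (metis One_nat_def Suc_leI card_gt_0_iff empty_iff)
      have "(2::nat) ^ m \<le> 2 ^ r * card ((\<lambda>y. vadd (h (vadd y t)) (h y)) ` vecs m)"
        using dcount[OF gh tv t0] .
      also have "\<dots> \<le> 2 ^ r * (2 * card P' - 2)" using ci by (rule mult_le_mono2)
      also have "\<dots> < 2 ^ r * (2 * card P')" using cp1 by simp
      also have "\<dots> = 2 * (2 ^ r * card P')" by simp
      also have "\<dots> \<le> 2 * 2 ^ (m - 1)" using sm(1) by simp
      also have "\<dots> = 2 ^ m" using sm(3) by (cases m) auto
      finally show False by simp
    qed
  qed
  have "vzero \<in> P'" using P' by (simp add: subspace_def)
  then have P'e: "P' = {vzero}" using P'0 by blast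
  show ?thesis
  proof
    show "P \<subseteq> {vzero}"
    proof
      fix x assume x: "x \<in> P"
      then have "f x \<in> P'" using fP by blast
      then have "f x = vzero" using P'e by simp
      then show "x \<in> {vzero}" using good_zero_iff[OF g] x Pv by blast
    qed
    show "{vzero} \<subseteq> P" using P by (simp add: subspace_def)
  qed
qed




lemma subspace_proj:
  assumes W: "subspace n W" shows "subspace m (proj m i ` W)"
  unfolding subspace_def
proof (intro conjI ballI)
  show "proj m i ` W \<subseteq> vecs m" by auto
  show "vzero \<in> proj m i ` W" using W proj_zero[of m i] unfolding subspace_def by (metis image_eqI)
  fix x y assume "x \<in> proj m i ` W" "y \<in> proj m i ` W"
  then obtain x' y' where "x' \<in> W" "y' \<in> W" "x = proj m i x'" "y = proj m i y'" by blast
  moreover then have "vadd x' y' \<in> W" using sub_add[OF W] by blast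
  ultimately show "vadd x y \<in> proj m i ` W" by (metis proj_vadd image_eqI)
qed

lemma subspace_pre:
  assumes W: "subspace n W" shows "subspace m {x \<in> vecs m. emb m i x \<in> W}"
  unfolding subspace_def
proof (intro conjI ballI)
  show "{x \<in> vecs m. emb m i x \<in> W} \<subseteq> vecs m" by auto
  show "vzero \<in> {x \<in> vecs m. emb m i x \<in> W}" using W by (simp add: subspace_def)
  fix x y assume "x \<in> {x \<in> vecs m. emb m i x \<in> W}" "y \<in> {x \<in> vecs m. emb m i x \<in> W}"
  then show "vadd x y \<in> {x \<in> vecs m. emb m i x \<in> W}"
    using sub_add[OF W] by (simp add: emb_vadd vecs_vadd)
qed

lemma JU_out: "i < b \<Longrightarrow> i \<notin> JU m b U \<Longrightarrow> block m b i \<subseteq> U"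
  by (auto simp: JU_def)

lemma JU_in:
  assumes m: "m > 0" and i: "i < b" and J: "i \<in> JU m b U"
  shows "\<exists>x0\<in>vecs m. emb m i x0 \<notin> U"
proof -
  from J obtain y where y: "y \<in> block m b i" "y \<notin> U" by (auto simp: JU_def)
  then obtain a where "a \<in> vecs m" "y = emb m i a" using block_iff[OF m i] by blast
  then show ?thesis using y(2) by blast
qed

locale cfg = par +
  fixes U W1 W2 U' W1' W2'
  assumes b: "b > 0" and D: "LAdata (m * b) U W1 W2" and D': "LAdata (m * b) U' W1' W2'"
    and bm: "\<And>x. x \<in> vecs (m * b) \<Longrightarrow> G ` Bl U W1 W2 x = Bl U' W1' W2' (G x)"
begin

lemma n: "m * b > 0" using m b by simp

lemma sU: "subspace (m * b) U" using D by (simp add: LAdata_def hyperplane_def)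
lemma sU': "subspace (m * b) U'" using D' by (simp add: LAdata_def hyperplane_def)
lemma sW1: "subspace (m * b) W1" using D by (simp add: LAdata_def)
lemma sW2: "subspace (m * b) W2" using D by (simp add: LAdata_def)
lemma sW1': "subspace (m * b) W1'" using D' by (simp add: LAdata_def)
lemma W1U: "W1 \<subseteq> U" using D by (simp add: LAdata_def)
lemma W2U: "W2 \<subseteq> U" using D by (simp add: LAdata_def)
lemma W1v: "W1 \<subseteq> vecs (m * b)" using sW1 by (simp add: subspace_def)
lemma W2v: "W2 \<subseteq> vecs (m * b)" using sW2 by (simp add: subspace_def)
lemma Uv: "U \<subseteq> vecs (m * b)" using sU by (simp add: subspace_def)

lemma GW1: "G ` W1 = W1'"
proof -
  have z: "vzero \<in> U" "vzero \<in> U'" using sU sU' by (auto simp: subspace_def)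
  have "G ` Bl U W1 W2 vzero = Bl U' W1' W2' (G vzero)" using bm by simp
  then show ?thesis using z G_zero by (simp add: Bl_def)
qed

lemma projW1': "i < b \<Longrightarrow> proj m i ` W1' = g i ` proj m i ` W1"
  unfolding GW1[symmetric] image_image using projG by simp

lemma Apre: assumes i: "i < b"
  shows "g i ` {x \<in> vecs m. emb m i x \<in> W1} = {y \<in> vecs m. emb m i y \<in> W1'}"
proof
  show "g i ` {x \<in> vecs m. emb m i x \<in> W1} \<subseteq> {y \<in> vecs m. emb m i y \<in> W1'}"
  proof
    fix y assume "y \<in> g i ` {x \<in> vecs m. emb m i x \<in> W1}"
    then obtain x where x: "x \<in> vecs m" "emb m i x \<in> W1" "y = g i x" by blast
    have "G (emb m i x) \<in> W1'" using x(2) GW1 by blast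
    then show "y \<in> {y \<in> vecs m. emb m i y \<in> W1'}"
      using G_emb[OF x(1) i] x(3) good_vecs[OF gi[OF i] x(1)] by simp
  qed
  show "{y \<in> vecs m. emb m i y \<in> W1'} \<subseteq> g i ` {x \<in> vecs m. emb m i x \<in> W1}"
  proof
    fix y assume y: "y \<in> {y \<in> vecs m. emb m i y \<in> W1'}"
    then obtain w where w: "w \<in> W1" "emb m i y = G w" using GW1 by blast
    define x where "x = ginv i y"
    have xv: "x \<in> vecs m" using good_vecs[OF ginv_good[rule_format, OF i]] y by (simp add: x_def)
    have gx: "g i x = y" using g_ginv[OF i] y by (simp add: x_def)
    have "G (emb m i x) = G w" using G_emb[OF xv i] gx w(2) by simp
    then have "emb m i x = w" using G_inj W1v w(1) emb_vecs[OF m xv i] by (auto simp: inj_on_def)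
    then show "y \<in> g i ` {x \<in> vecs m. emb m i x \<in> W1}" using xv gx w(1) by blast
  qed
qed

lemma h5gen:
  assumes i: "i < b" and w: "w \<in> W1" and x: "x \<in> vecs m"
    and eU: "emb m i x \<in> U" and eU': "emb m i (g i x) \<in> U'"
  shows "vadd (vadd (g i (vadd (proj m i w) x)) (g i x)) (g i (proj m i w)) \<in> {y \<in> vecs m. emb m i y \<in> W1'}"
proof -
  define e where "e = emb m i x"
  define a where "a = proj m i w"
  have ev: "e \<in> vecs (m * b)" using emb_vecs[OF m x i] by (simp add: e_def)
  have Ge: "G e = emb m i (g i x)" using G_emb[OF x i] by (simp add: e_def)
  have "vadd w e \<in> coset W1 e" by (rule coset_memI) (simp add: w)
  then have "G (vadd w e) \<in> G ` Bl U W1 W2 e" using eU by (simp add: Bl_def e_def)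
  then have "G (vadd w e) \<in> coset W1' (G e)" using bm[OF ev] Ge eU' by (simp add: Bl_def)
  then have 1: "vadd (G (vadd w e)) (G e) \<in> W1'" by (rule coset_memD)
  have Gw: "G w \<in> W1'" using GW1 w by blast
  have 2: "vadd (G w) (vadd (G (vadd w e)) (G e)) \<in> W1'" using sub_add[OF sW1' Gw 1] .
  have "G (vadd w e) = vadd (G w) (emb m i (vadd (g i (vadd a x)) (g i a)))"
    using G_shift[OF x i] by (simp add: e_def a_def)
  then have "vadd (G w) (vadd (G (vadd w e)) (G e)) =
      emb m i (vadd (vadd (g i (vadd a x)) (g i x)) (g i a))"
    using Ge by (simp add: emb_vadd vadd_ac)
  moreover have "vadd (vadd (g i (vadd a x)) (g i x)) (g i a) \<in> vecs m"
    using good_vecs[OF gi[OF i]] x by (intro vecs_vadd) (auto simp: a_def)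
  ultimately show ?thesis using 2 by (simp add: a_def)
qed

lemma C1:
  assumes j: "j < b" and J: "j \<in> JU m b U" and J': "j \<notin> JU m b U'"
  shows "proj m j ` W1 = {vzero}"
proof -
  define f where "f = g j"
  define H where "H = {x \<in> vecs m. emb m j x \<in> U}"
  have gf: "good m r f" using gi[OF j] by (simp add: f_def)
  obtain x0 where x0: "x0 \<in> vecs m" "emb m j x0 \<notin> U" using JU_in[OF m j J] by blast
  have bU': "block m b j \<subseteq> U'" using JU_out[OF j J'] .
  have embU': "\<And>x. x \<in> vecs m \<Longrightarrow> emb m j (f x) \<in> U'"
    using bU' block_iff[OF m j] good_vecs[OF gf] by blast
  have Hs: "subspace m H" unfolding H_def by (rule subspace_pre[OF sU])
  show ?thesis
  proof (rule comp_C1[OF gf, where H=H and xo=x0 and Q="proj m j ` W2" and P'="proj m j ` W1'"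
        and A="{x \<in> vecs m. emb m j x \<in> W1}" and A'="{y \<in> vecs m. emb m j y \<in> W1'}"])
    show "H \<subseteq> vecs m" "vzero \<in> H" using Hs by (auto simp: subspace_def)
    show "x0 \<in> vecs m" "x0 \<notin> H" using x0 by (auto simp: H_def)
    show "\<And>x y. x \<in> vecs m \<Longrightarrow> x \<notin> H \<Longrightarrow> y \<in> vecs m \<Longrightarrow> y \<notin> H \<Longrightarrow> vadd x y \<in> H"
    proof -
      fix x y assume "x \<in> vecs m" "x \<notin> H" "y \<in> vecs m" "y \<notin> H"
      then show "vadd x y \<in> H"
        using D_compl[OF D n, of "emb m j x" "emb m j y"] emb_vecs[OF m _ j]
        by (auto simp: H_def emb_vadd vecs_vadd)
    qed
    show "subspace m (proj m j ` W1)" "subspace m (proj m j ` W2)" "subspace m (proj m j ` W1')"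
      using subspace_proj sW1 sW2 sW1' by blast+
    show "f ` proj m j ` W1 = proj m j ` W1'" using projW1'[OF j] by (simp add: f_def)
    show "subspace m {x \<in> vecs m. emb m j x \<in> W1}" "subspace m {y \<in> vecs m. emb m j y \<in> W1'}"
      using subspace_pre sW1 sW1' by blast+
    show "{x \<in> vecs m. emb m j x \<in> W1} \<subseteq> H" using W1U by (auto simp: H_def)
    show "f ` {x \<in> vecs m. emb m j x \<in> W1} = {y \<in> vecs m. emb m j y \<in> W1'}"
      using Apre[OF j] by (simp add: f_def)
    show "\<And>a x. a \<in> proj m j ` W1 \<Longrightarrow> x \<in> H \<Longrightarrow>
        vadd (vadd (f (vadd a x)) (f x)) (f a) \<in> {y \<in> vecs m. emb m j y \<in> W1'}"
    proof -
      fix a x assume a: "a \<in> proj m j ` W1" and x: "x \<in> H"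
      then obtain w where w: "w \<in> W1" "a = proj m j w" by blast
      have xv: "x \<in> vecs m" using x by (simp add: H_def)
      show "vadd (vadd (f (vadd a x)) (f x)) (f a) \<in> {y \<in> vecs m. emb m j y \<in> W1'}"
        using h5gen[OF j w(1) xv] x embU'[OF xv] w(2) by (simp add: H_def f_def)
    qed
    show "\<And>x. x \<in> vecs m \<Longrightarrow>
        f ` coset (if x \<in> H then proj m j ` W1 else proj m j ` W2) x = coset (proj m j ` W1') (f x)"
    proof -
      fix x assume x: "x \<in> vecs m"
      define e where "e = emb m j x"
      have ev: "e \<in> vecs (m * b)" using emb_vecs[OF m x j] by (simp add: e_def)
      have Ge: "G e = emb m j (f x)" using G_emb[OF x j] by (simp add: e_def f_def)
      have pe: "proj m j e = x" using proj_emb_same[OF m x] by (simp add: e_def)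
      have 1: "G ` Bl U W1 W2 e = coset W1' (G e)" using bm[OF ev] Ge embU'[OF x] by (simp add: Bl_def)
      have pc: "\<And>W v. proj m j ` coset W v = coset (proj m j ` W) (proj m j v)"
        by (auto simp: coset_def image_image proj_vadd)
      have "proj m j ` G ` Bl U W1 W2 e = f ` proj m j ` Bl U W1 W2 e"
        by (simp add: image_image projG[OF j] f_def)
      also have "proj m j ` Bl U W1 W2 e = coset (if x \<in> H then proj m j ` W1 else proj m j ` W2) x"
        using pc pe x by (simp add: Bl_def H_def e_def)
      finally have "f ` coset (if x \<in> H then proj m j ` W1 else proj m j ` W2) x = proj m j ` coset W1' (G e)"
        using 1 by simp
      also have "\<dots> = coset (proj m j ` W1') (f x)" using pc Ge proj_emb_same[OF m good_vecs[OF gf x]] by simp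
      finally show "f ` coset (if x \<in> H then proj m j ` W1 else proj m j ` W2) x = coset (proj m j ` W1') (f x)" .
    qed
  qed
qed

end




definition wset :: "nat \<Rightarrow> nat \<Rightarrow> nat set \<Rightarrow> (nat \<Rightarrow> bool) set" where
  "wset m b I = {x \<in> vecs (m * b). \<forall>k. x k \<longrightarrow> k div m \<in> I}"

lemma wset_sub:
  assumes m: "m > 0" and S: "subspace (m * b) S" and bl: "\<And>i. i \<in> I \<Longrightarrow> i < b \<Longrightarrow> block m b i \<subseteq> S"
  shows "wset m b I \<subseteq> S"
proof
  fix x assume x: "x \<in> wset m b I"
  then have xv: "x \<in> vecs (m * b)" and xI: "\<And>k. x k \<Longrightarrow> k div m \<in> I" by (auto simp: wset_def)
  define xt where "xt t = (\<lambda>k. x k \<and> k div m < t)" for t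
  have "xt t \<in> S" for t
  proof (induction t)
    case 0
    have "xt 0 = vzero" by (simp add: xt_def vzero_def fun_eq_iff)
    then show ?case using S by (simp add: subspace_def)
  next
    case (Suc t)
    have pe: "emb m t (proj m t x) = (\<lambda>k. x k \<and> k div m = t)"
    proof
      fix k
      have "k div m * m + k mod m = k" by simp
      then show "emb m t (proj m t x) k = (x k \<and> k div m = t)"
        using m by (auto simp: emb_def proj_def)
    qed
    have e: "xt (Suc t) = vadd (xt t) (emb m t (proj m t x))"
      unfolding pe by (auto simp: xt_def vadd_def fun_eq_iff)
    show ?case
    proof (cases "t \<in> I \<and> t < b")
      case True
      have "emb m t (proj m t x) \<in> block m b t" using block_iff[OF m, of t b] True by auto
      then have "emb m t (proj m t x) \<in> S" using bl True by blast
      then show ?thesis using e sub_add[OF S Suc.IH] by simp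
    next
      case False
      have "emb m t (proj m t x) = vzero"
      proof
        fix k
        show "emb m t (proj m t x) k = vzero k"
        proof (rule ccontr)
          assume "emb m t (proj m t x) k \<noteq> vzero k"
          then have k: "x k" "k div m = t" using pe by (auto simp: vzero_def)
          then have "t \<in> I" using xI by blast
          moreover have "k < m * b" using xv k(1) by (auto simp: vecs_def not_le[symmetric])
          then have "t < b" using k(2) vec_decomp(1)[OF m xv] by blast
          ultimately show False using False by blast
        qed
      qed
      then show ?thesis using e Suc.IH by simp
    qed
  qed
  moreover have "xt b = x"
  proof
    fix k
    show "xt b k = x k"
    proof (cases "x k")
      case True
      then have "k < m * b" using xv by (auto simp: vecs_def not_le[symmetric])
      then show ?thesis using True vec_decomp(1)[OF m xv] by (simp add: xt_def)
    qed (simp add: xt_def)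
  qed
  ultimately show "x \<in> S" by metis
qed

lemma sub_wset:
  assumes m: "m > 0" and S: "S \<subseteq> vecs (m * b)"
  shows "S \<subseteq> wset m b {i. i < b \<and> proj m i ` S \<noteq> {vzero}}"
proof
  fix x assume x: "x \<in> S"
  have xv: "x \<in> vecs (m * b)" using x S by blast
  { fix k assume k: "x k"
    have kk: "k < m * b" using xv k by (auto simp: vecs_def not_le[symmetric])
    have "proj m (k div m) x (k mod m)" using vec_decomp(2)[OF m xv kk] k by simp
    then have "proj m (k div m) x \<noteq> vzero" by (auto simp: vzero_def)
    then have "proj m (k div m) ` S \<noteq> {vzero}" using x by blast
    then have "k div m < b \<and> proj m (k div m) ` S \<noteq> {vzero}" using vec_decomp(1)[OF m xv kk] by blast }
  then show "x \<in> wset m b {i. i < b \<and> proj m i ` S \<noteq> {vzero}}" using xv by (auto simp: wset_def)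
qed

lemma wset_proj: "x \<in> wset m b I \<Longrightarrow> j \<notin> I \<Longrightarrow> m > 0 \<Longrightarrow> proj m j x = vzero"
proof
  fix l assume x: "x \<in> wset m b I" and j: "j \<notin> I" and m: "m > 0"
  show "proj m j x l = vzero l"
  proof (cases "l < m")
    case True
    have "(j * m + l) div m = j" using True by simp
    then have "\<not> x (j * m + l)" using x j by (auto simp: wset_def)
    then show ?thesis using True by (simp add: proj_def vzero_def)
  qed (simp add: proj_def vzero_def)
qed

lemma wset_empty: "wset m b {} = {vzero}"
  by (auto simp: wset_def vzero_def vecs_def fun_eq_iff)

lemma wset_all: "m > 0 \<Longrightarrow> vecs (m * b) \<subseteq> wset m b {..<b}"
proof
  fix x assume m: "m > 0" and x: "x \<in> vecs (m * b)"
  { fix k assume k: "x k"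
    then have "k < m * b" using x by (auto simp: vecs_def not_le[symmetric])
    then have "k div m < b" using vec_decomp(1)[OF m x] by blast }
  then show "x \<in> wset m b {..<b}" using x by (auto simp: wset_def)
qed

context cfg begin

lemma full:
  assumes i: "i < b" and J: "i \<notin> JU m b U" and J': "i \<notin> JU m b U'"
    and ne: "proj m i ` W1 \<noteq> {vzero}"
  shows "block m b i \<subseteq> W1 \<and> block m b i \<subseteq> W1'"
proof -
  have "vzero \<in> proj m i ` W1" using sW1 proj_zero[of m i] unfolding subspace_def by (metis image_eqI)
  then obtain w where w: "w \<in> W1" "proj m i w \<noteq> vzero" using ne by blast
  define a where "a = proj m i w"
  have bU: "block m b i \<subseteq> U" and bU': "block m b i \<subseteq> U'" using JU_out[OF i] J J' by auto
  have A: "{x \<in> vecs m. emb m i x \<in> W1} = vecs m"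
  proof (rule comp_full[OF gi[OF i] _ _ subspace_pre[OF sW1] subspace_pre[OF sW1'] Apre[OF i]])
    show "a \<in> vecs m" "a \<noteq> vzero" using w by (auto simp: a_def)
    fix x assume x: "x \<in> vecs m"
    have "emb m i x \<in> U" using bU block_iff[OF m i] x by blast
    moreover have "emb m i (g i x) \<in> U'" using bU' block_iff[OF m i] good_vecs[OF gi[OF i] x] by blast
    ultimately show "vadd (vadd (g i (vadd a x)) (g i x)) (g i a) \<in> {y \<in> vecs m. emb m i y \<in> W1'}"
      using h5gen[OF i w(1) x] by (simp add: a_def)
  qed
  have A': "{y \<in> vecs m. emb m i y \<in> W1'} = vecs m"
    using Apre[OF i] A gi[OF i] by (simp add: good_def bij_betw_def)
  show ?thesis
  proof
    show "block m b i \<subseteq> W1"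
    proof
      fix y assume "y \<in> block m b i"
      then obtain c where "c \<in> vecs m" "y = emb m i c" using block_iff[OF m i] by blast
      then show "y \<in> W1" using A by blast
    qed
    show "block m b i \<subseteq> W1'"
    proof
      fix y assume "y \<in> block m b i"
      then obtain c where "c \<in> vecs m" "y = emb m i c" using block_iff[OF m i] by blast
      then show "y \<in> W1'" using A' by blast
    qed
  qed
qed

lemma W2eq:
  assumes j: "j < b" and J: "j \<in> JU m b U" and J': "j \<notin> JU m b U'"
    and z: "\<And>w. w \<in> W1 \<Longrightarrow> proj m j w = vzero"
  shows "W2 = W1"
proof -
  obtain x0 where x0: "x0 \<in> vecs m" "emb m j x0 \<notin> U" using JU_in[OF m j J] by blast
  define e where "e = emb m j x0"
  have ev: "e \<in> vecs (m * b)" using emb_vecs[OF m x0(1) j] by (simp add: e_def)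
  have Ge: "G e = emb m j (g j x0)" using G_emb[OF x0(1) j] by (simp add: e_def)
  have GeU': "G e \<in> U'"
    using JU_out[OF j J'] block_iff[OF m j] good_vecs[OF gi[OF j] x0(1)] Ge by blast
  have 1: "G ` coset W2 e = coset W1' (G e)" using bm[OF ev] x0(2) GeU' by (simp add: Bl_def e_def)
  have "G ` coset W1 e = (\<lambda>w. G (vadd w e)) ` W1" by (simp add: coset_def image_image)
  also have "\<dots> = (\<lambda>w. vadd (G w) (G e)) ` W1"
  proof (rule image_cong[OF refl])
    fix w assume w: "w \<in> W1"
    show "G (vadd w e) = vadd (G w) (G e)"
      using G_shift[OF x0(1) j, of w] z[OF w] good_zero[OF gi[OF j]] Ge by (simp add: e_def)
  qed
  also have "\<dots> = coset W1' (G e)" unfolding GW1[symmetric] coset_def image_image by (rule refl)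
  finally have 2: "G ` coset W1 e = G ` coset W2 e" using 1 by simp
  have "coset W1 e = coset W2 e"
    using inj_on_image_eq_iff[OF G_inj coset_vecs[OF W1v ev] coset_vecs[OF W2v ev]] 2 by simp
  then show ?thesis by (metis coset_cancel)
qed

end




lemma good_from:
  assumes perm: "bij_betw f (vecs m) (vecs m)" and du: "diff_uniform m f (2 ^ r)"
    and sai: "strongly_anti_invariant m r f"
  shows "good m r f"
proof -
  have f0: "f vzero = vzero" and ai: "AI m r f" using sai
    by (auto simp: strongly_anti_invariant_def AI_def)
  have fv: "\<And>x. x \<in> vecs m \<Longrightarrow> f x \<in> vecs m" using perm by (auto simp: bij_betw_def)
  define S where "S = {card {x \<in> vecs m. vadd (f (vadd x a)) (f x) = c} | a c.
                a \<in> vecs m \<and> a \<noteq> vzero \<and> c \<in> vecs m}"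
  have finS: "finite S"
  proof -
    have "S \<subseteq> (\<lambda>(a, c). card {x \<in> vecs m. vadd (f (vadd x a)) (f x) = c}) ` (vecs m \<times> vecs m)"
      by (auto simp: S_def)
    then show ?thesis by (rule finite_subset) simp
  qed
  have mx: "2 ^ r = Max S" using du by (simp add: diff_uniform_def S_def)
  have un: "uniform m r f" unfolding uniform_def
  proof (intro ballI allI impI)
    fix a c assume a: "a \<in> vecs m" "a \<noteq> vzero"
    show "card {x \<in> vecs m. vadd (f (vadd x a)) (f x) = c} \<le> 2 ^ r"
    proof (cases "c \<in> vecs m")
      case True
      then have "card {x \<in> vecs m. vadd (f (vadd x a)) (f x) = c} \<in> S" using a by (auto simp: S_def)
      then show ?thesis using finS mx by simp
    next
      case False
      have e: "{x \<in> vecs m. vadd (f (vadd x a)) (f x) = c} = {}"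
      proof (rule ccontr)
        assume "{x \<in> vecs m. vadd (f (vadd x a)) (f x) = c} \<noteq> {}"
        then obtain x where x: "x \<in> vecs m" "vadd (f (vadd x a)) (f x) = c" by blast
        have "vadd x a \<in> vecs m" using x(1) a(1) by (rule vecs_vadd)
        then have "c \<in> vecs m" using x fv vecs_vadd by metis
        then show False using False by simp
      qed
      show ?thesis unfolding e by simp
    qed
  qed
  show ?thesis using perm f0 un ai by (simp add: good_def)
qed

theorem lemma3p12:
  fixes m b r :: nat
    and g :: "nat \<Rightarrow> (nat \<Rightarrow> bool) \<Rightarrow> (nat \<Rightarrow> bool)"
    and U W1 W2 U' W1' W2' :: "(nat \<Rightarrow> bool) set"
  assumes "m > 1" and "b > 1"
    and perm: "\<forall>i<b. bij_betw (g i) (vecs m) (vecs m)"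
    and zero: "parallel m b g vzero = vzero"
    and du: "\<forall>i<b. diff_uniform m (g i) (2 ^ r)"
    and "r < m - 1"
    and sai: "\<forall>i<b. strongly_anti_invariant m r (g i)"
    and U: "hyperplane (m * b) U" "subspace (m * b) W1" "subspace (m * b) W2" "W1 \<subseteq> U" "W2 \<subseteq> U"
    and U': "hyperplane (m * b) U'" "subspace (m * b) W1'" "subspace (m * b) W2'"
            "W1' \<subseteq> U'" "W2' \<subseteq> U'"
    and J: "JU m b U \<inter> JU m b U' = {}"
    and nontriv: "\<not> trivial_partition (m * b) (LA (m * b) U' W1' W2')"
    and maps: "maps_onto (parallel m b g) (LA (m * b) U W1 W2) (LA (m * b) U' W1' W2')"
  shows "wall m b W1 \<and> wall m b W1' \<and> wall m b W2 \<and> wall m b W2' \<and>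
         W1 = W1' \<and> W1' = W2 \<and> W2 = W2' \<and>
         LA (m * b) U W1 W2 = lin_part (m * b) W1 \<and>
         LA (m * b) U' W1' W2' = lin_part (m * b) W1'"
proof -
  have m0: "m > 0" and b0: "b > 0" using assms(1,2) by auto
  have n: "m * b > 0" using m0 b0 by simp
  have gg: "\<forall>i<b. good m r (g i)"
  proof (intro allI impI)
    fix i assume i: "i < b"
    show "good m r (g i)" using good_from[OF perm[rule_format, OF i] du[rule_format, OF i] sai[rule_format, OF i]] .
  qed
  interpret par m b r g using m0 gg by unfold_locales
  have D: "LAdata (m * b) U W1 W2" using U by (simp add: LAdata_def)
  have D': "LAdata (m * b) U' W1' W2'" using U' by (simp add: LAdata_def)
  have bm: "\<And>x. x \<in> vecs (m * b) \<Longrightarrow> G ` Bl U W1 W2 x = Bl U' W1' W2' (G x)"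
    using blockmap[OF D D' n par_vecs maps] by blast
  interpret c1: cfg m b r g U W1 W2 U' W1' W2'
    using b0 D D' bm by unfold_locales auto
  have bm2: "\<And>y. y \<in> vecs (m * b) \<Longrightarrow> parallel m b ginv ` Bl U' W1' W2' y = Bl U W1 W2 (parallel m b ginv y)"
    using blockmap_inv[OF D n Gi_G G_Gi par_vecs bm] by blast
  interpret c2: cfg m b r ginv U' W1' W2' U W1 W2
    using m0 ginv_good b0 D D' bm2 by unfold_locales auto
  define I where "I = {i. i < b \<and> proj m i ` W1 \<noteq> {vzero}}"
  have projeq: "\<And>i. i < b \<Longrightarrow> proj m i ` W1' = {vzero} \<longleftrightarrow> proj m i ` W1 = {vzero}"
  proof -
    fix i assume i: "i < b"
    have e: "proj m i ` W1' = g i ` proj m i ` W1" using c1.projW1'[OF i] .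
    have z: "vzero \<in> proj m i ` W1" using c1.sW1 proj_zero[of m i] unfolding subspace_def by (metis image_eqI)
    show "proj m i ` W1' = {vzero} \<longleftrightarrow> proj m i ` W1 = {vzero}"
    proof
      assume a: "proj m i ` W1' = {vzero}"
      show "proj m i ` W1 = {vzero}"
      proof (rule set_eqI, rule iffI)
        fix x assume x: "x \<in> proj m i ` W1"
        then have "g i x = vzero" using a e by blast
        then show "x \<in> {vzero}" using good_zero_iff[OF gi[OF i]] x by auto
      qed (use z in auto)
    next
      assume "proj m i ` W1 = {vzero}"
      then show "proj m i ` W1' = {vzero}" using e good_zero[OF gi[OF i]] by simp
    qed
  qed
  have notJ: "\<And>i. i \<in> I \<Longrightarrow> i \<notin> JU m b U \<and> i \<notin> JU m b U'"
  proof -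
    fix i assume iI: "i \<in> I"
    then have i: "i < b" and ne: "proj m i ` W1 \<noteq> {vzero}" by (auto simp: I_def)
    have 1: "i \<notin> JU m b U"
    proof
      assume iJ: "i \<in> JU m b U"
      then have "i \<notin> JU m b U'" using J by blast
      then show False using c1.C1[OF i iJ] ne by simp
    qed
    have 2: "i \<notin> JU m b U'"
    proof
      assume iJ: "i \<in> JU m b U'"
      then have "i \<notin> JU m b U" using J by blast
      then have "proj m i ` W1' = {vzero}" using c2.C1[OF i iJ] by simp
      then show False using projeq[OF i] ne by simp
    qed
    show "i \<notin> JU m b U \<and> i \<notin> JU m b U'" using 1 2 by simp
  qed
  have blk: "\<And>i. i \<in> I \<Longrightarrow> block m b i \<subseteq> W1 \<and> block m b i \<subseteq> W1'"
    using c1.full notJ by (auto simp: I_def)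
  have W1w: "W1 = wset m b I"
  proof
    show "W1 \<subseteq> wset m b I" using sub_wset[OF m0 c1.W1v] by (simp add: I_def)
    show "wset m b I \<subseteq> W1" using wset_sub[OF m0 c1.sW1] blk by blast
  qed
  have I': "{i. i < b \<and> proj m i ` W1' \<noteq> {vzero}} = I" using projeq by (auto simp: I_def)
  have W1'w: "W1' = wset m b I"
  proof
    show "W1' \<subseteq> wset m b I" using sub_wset[OF m0 c2.W1v] I' by simp
    show "wset m b I \<subseteq> W1'" using wset_sub[OF m0 c1.sW1'] blk by blast
  qed
  have JUne: "\<And>V W1 W2. LAdata (m * b) V W1 W2 \<Longrightarrow> \<exists>j<b. j \<in> JU m b V"
  proof (rule ccontr)
    fix V W1 W2 assume DV: "LAdata (m * b) V W1 W2" and "\<not> (\<exists>j<b. j \<in> JU m b V)"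
    then have "\<And>i. i < b \<Longrightarrow> block m b i \<subseteq> V" using JU_out by blast
    then have "wset m b {..<b} \<subseteq> V" using wset_sub[OF m0 D_U[OF DV n]] by blast
    then have "vecs (m * b) \<subseteq> V" using wset_all[OF m0] by blast
    then show False using D_ne[OF DV n] D_Uv[OF DV n] by blast
  qed
  obtain j where j: "j < b" "j \<in> JU m b U" using JUne[OF D] by blast
  obtain k where k: "k < b" "k \<in> JU m b U'" using JUne[OF D'] by blast
  have jI: "j \<notin> I" using notJ j by blast
  have kI: "k \<notin> I" using notJ k by blast
  have jn: "j \<notin> JU m b U'" using J j by blast
  have kn: "k \<notin> JU m b U" using J k by blast
  have W2e: "W2 = W1"
  proof (rule c1.W2eq[OF j(1) j(2) jn])
    fix w assume "w \<in> W1"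
    then have "w \<in> wset m b I" using W1w by simp
    then show "proj m j w = vzero" using wset_proj jI m0 by blast
  qed
  have W2'e: "W2' = W1'"
  proof (rule c2.W2eq[OF k(1) k(2) kn])
    fix w assume "w \<in> W1'"
    then have "w \<in> wset m b I" using W1'w by simp
    then show "proj m k w = vzero" using wset_proj kI m0 by blast
  qed
  have Ine: "I \<noteq> {}"
  proof
    assume "I = {}"
    then have z: "W1' = {vzero}" "W2' = {vzero}" using W1'w W2'e wset_empty by auto
    have "LA (m * b) U' W1' W2' = lin_part (m * b) {vzero}"
      using LA_lin[of "m * b" U' "{vzero}"] D' z n by simp
    also have "\<dots> = {{v} | v. v \<in> vecs (m * b)}" by (auto simp: lin_part_def coset_def)
    finally show False using nontriv by (simp add: trivial_partition_def)
  qed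
  have Ib: "I \<subset> {..<b}" using jI j(1) by (auto simp: I_def)
  have wI: "wall m b (wset m b I)" unfolding wall_def wset_def using Ine Ib by blast
  have LA1: "LA (m * b) U W1 W2 = lin_part (m * b) W1" using LA_lin[of "m * b" U W1] D W2e n by simp
  have LA2: "LA (m * b) U' W1' W2' = lin_part (m * b) W1'" using LA_lin[of "m * b" U' W1'] D' W2'e n by simp
  show ?thesis using wI W1w W1'w W2e W2'e LA1 LA2 by simp
qed



end
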